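(* Let $(H,d)$ be an Hadamard space, i.e. a complete CAT(0) space. Then $\operatorname{Curv} H\leq 0$.
   Context: A CAT(0) space is a geodesic metric space $(X,d)$ such that for every $z\in X$, every geodesic $\gamma\colon[0,1]\to X$ (i.e. $d(\gamma(s),\gamma(t))=d(\gamma(0),\gamma(1))|s-t|$) and every $t\in[0,1]$: $d(z,\gamma(t))^2\le (1-t)d(z,\gamma(0))^2+t\,d(z,\gamma(1))^2-t(1-t)d(\gamma(0),\gamma(1))^2$. For a metric space $(X,d)$, a triangle is a triple $(a_1,a_2,a_3)$ of points of $X$; a comparison triangle is a triple $(\bar a_1,\bar a_2,\bar a_3)$ in the Euclidean plane $\mathbb{R}^2$ with $\|\bar a_i-\bar a_j\|=d(a_i,a_j)$ for all $i,j$ (unique up to isometry). The circumradius of the triangle is $r(a_1,a_2,a_3)=\inf_{x\in X}\max_{i=1,2,3}d(x,a_i)$, and $r(\bar a_1,\bar a_2,\bar a_3)=\min_{x\in\mathbb{R}^2}\max_{i}\|x-\bar a_i\|$. We write $\operatorname{Curv} X\le 0$ if for every triangle $(a_1,a_2,a_3)$ in $X$ one has $r(a_1,a_2,a_3)\le r(\bar a_1,\bar a_2,\bar a_3)$ for a comparison triangle $(\bar a_1,\bar a_2,\bar a_3)$. *)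

theory Defs
  imports "HOL-Analysis.Analysis"
begin

definition is_geodesic :: "(real \<Rightarrow> 'a::metric_space) \<Rightarrow> bool" where
  "is_geodesic g \<longleftrightarrow>
     (\<forall>s\<in>{0..1}. \<forall>t\<in>{0..1}. dist (g s) (g t) = dist (g 0) (g 1) * \<bar>s - t\<bar>)"

definition geodesic_space :: "'a::metric_space itself \<Rightarrow> bool" where
  "geodesic_space _ \<longleftrightarrow>
     (\<forall>x y::'a. \<exists>g. is_geodesic g \<and> g 0 = x \<and> g 1 = y)"

definition CAT0 :: "'a::metric_space itself \<Rightarrow> bool" where
  "CAT0 T \<longleftrightarrow> geodesic_space T \<and>
     (\<forall>(z::'a) g t. is_geodesic g \<and> t \<in> {0..1} \<longrightarrow>
        (dist z (g t))\<^sup>2 \<le> (1 - t) * (dist z (g 0))\<^sup>2 + t * (dist z (g 1))\<^sup>2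
                          - t * (1 - t) * (dist (g 0) (g 1))\<^sup>2)"

definition circumradius :: "'a::metric_space \<Rightarrow> 'a \<Rightarrow> 'a \<Rightarrow> real" where
  "circumradius a1 a2 a3 = (INF x. max (dist x a1) (max (dist x a2) (dist x a3)))"

definition comparison_triangle ::
  "'a::metric_space \<Rightarrow> 'a \<Rightarrow> 'a \<Rightarrow> real^2 \<Rightarrow> real^2 \<Rightarrow> real^2 \<Rightarrow> bool" where
  "comparison_triangle a1 a2 a3 b1 b2 b3 \<longleftrightarrow>
     dist b1 b2 = dist a1 a2 \<and> dist b2 b3 = dist a2 a3 \<and> dist b1 b3 = dist a1 a3"

definition curv_le_0 :: "'a::metric_space itself \<Rightarrow> bool" where
  "curv_le_0 _ \<longleftrightarrow>
     (\<forall>(a1::'a) a2 a3 (b1::real^2) b2 b3.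
        comparison_triangle a1 a2 a3 b1 b2 b3 \<longrightarrow>
        circumradius a1 a2 a3 \<le> circumradius b1 b2 b3)"

end

theory Submission imports Defs begin

lemma eucl_K:
  fixes y b1 b2 b3 :: "'b::real_inner"
  assumes "l1 \<ge> 0" "l2 \<ge> 0" "l3 \<ge> 0" "l1 + l2 + l3 = 1"
  shows "l1*l2*(dist b1 b2)\<^sup>2 + l1*l3*(dist b1 b3)\<^sup>2 + l2*l3*(dist b2 b3)\<^sup>2
     \<le> l1*(dist y b1)\<^sup>2 + l2*(dist y b2)\<^sup>2 + l3*(dist y b3)\<^sup>2"
proof -
  define u1 where "u1 = b1 - y"
  define u2 where "u2 = b2 - y"
  define u3 where "u3 = b3 - y"
  have d: "dist y b1 = norm u1" "dist y b2 = norm u2" "dist y b3 = norm u3"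
     "dist b1 b2 = norm (u1 - u2)" "dist b1 b3 = norm (u1 - u3)" "dist b2 b3 = norm (u2 - u3)"
    by (simp_all add: u1_def u2_def u3_def dist_norm norm_minus_commute)
  have l3: "l3 = 1 - l1 - l2" using assms by simp
  have "0 \<le> (norm (l1 *\<^sub>R u1 + l2 *\<^sub>R u2 + l3 *\<^sub>R u3))\<^sup>2" by simp
  also have "\<dots> = (l1*(dist y b1)\<^sup>2 + l2*(dist y b2)\<^sup>2 + l3*(dist y b3)\<^sup>2)
      - (l1*l2*(dist b1 b2)\<^sup>2 + l1*l3*(dist b1 b3)\<^sup>2 + l2*l3*(dist b2 b3)\<^sup>2)"
    unfolding d power2_norm_eq_inner
    by (simp add: inner_add_left inner_add_right inner_diff_left inner_diff_right inner_commute l3 algebra_simps power2_eq_square)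
  finally show ?thesis by simp
qed

lemma geo_dist: "is_geodesic g \<Longrightarrow> s \<in> {0..1} \<Longrightarrow> t \<in> {0..1} \<Longrightarrow>
  dist (g s) (g t) = dist (g 0) (g 1) * \<bar>s - t\<bar>"
  unfolding is_geodesic_def by blast

lemma frac01: fixes l1 l2 :: real assumes "l1 \<ge> 0" "l2 \<ge> 0"
  shows "l2 / (l1 + l2) \<in> {0..1}"
proof -
  have "0 \<le> l2 / (l1 + l2)" using assms by simp
  moreover have "l2 / (l1 + l2) \<le> 1"
  proof (cases "l1 + l2 = 0")
    case True then show ?thesis by simp
  next
    case False then have pos: "l1 + l2 > 0" using assms by linarith
    have "l2 \<le> 1 * (l1 + l2)" using assms by simp
    then show ?thesis by (simp only: pos_divide_le_eq[OF pos])
  qed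
  ultimately show ?thesis by simp
qed

lemma nested:
  fixes a1 a2 a3 :: "'a::metric_space"
  assumes cat: "CAT0 TYPE('a)"
    and "l1 \<ge> 0" "l2 \<ge> 0" "l3 \<ge> 0" "l1 + l2 + l3 = 1"
  shows "\<exists>x::'a. l1*(dist x a1)\<^sup>2 + l2*(dist x a2)\<^sup>2 + l3*(dist x a3)\<^sup>2
     \<le> l1*l2*(dist a1 a2)\<^sup>2 + l1*l3*(dist a1 a3)\<^sup>2 + l2*l3*(dist a2 a3)\<^sup>2"
proof -
  have gs: "geodesic_space TYPE('a)" and ineq: "\<And>(z::'a) g t. is_geodesic g \<Longrightarrow> t \<in> {0..1} \<Longrightarrow>
        (dist z (g t))\<^sup>2 \<le> (1 - t) * (dist z (g 0))\<^sup>2 + t * (dist z (g 1))\<^sup>2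
                          - t * (1 - t) * (dist (g 0) (g 1))\<^sup>2"
    using cat unfolding CAT0_def by blast+
  obtain g1 where g1: "is_geodesic g1" "g1 0 = a1" "g1 1 = a2" using gs unfolding geodesic_space_def by blast
  define mu where "mu = l1 + l2"
  define t where "t = l2 / mu"
  have t01: "t \<in> {0..1}" unfolding t_def mu_def by (rule frac01) (use assms in auto)
  have l2e: "l2 = mu * t" and l1e: "l1 = mu * (1 - t)"
  proof -
    have A: "l2 = mu * t \<and> l1 = mu * (1 - t)"
    proof (cases "mu = 0")
      case True then show ?thesis using assms unfolding t_def mu_def by auto
    next
      case False
      have "mu * t = l2" unfolding t_def using False by simp
      moreover have "l1 = mu - l2" unfolding mu_def by simp
      ultimately show ?thesis by (simp add: algebra_simps)
    qed
    then show "l2 = mu * t" "l1 = mu * (1 - t)" by auto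
  qed
  define p where "p = g1 t"
  have dp1: "dist a1 p = dist a1 a2 * t"
  proof -
    have "dist (g1 0) (g1 t) = dist (g1 0) (g1 1) * \<bar>0 - t\<bar>"
      using geo_dist[OF g1(1), of 0 t] t01 by simp
    then show ?thesis using g1 t01 unfolding p_def by simp
  qed
  have dp2: "dist a2 p = dist a1 a2 * (1 - t)"
  proof -
    have "dist (g1 t) (g1 1) = dist (g1 0) (g1 1) * \<bar>t - 1\<bar>"
      using geo_dist[OF g1(1), of t 1] t01 by simp
    then show ?thesis using g1 t01 unfolding p_def by (simp add: dist_commute)
  qed
  obtain g2 where g2: "is_geodesic g2" "g2 0 = p" "g2 1 = a3" using gs unfolding geodesic_space_def by blast
  define s where "s = l3"
  have s01: "s \<in> {0..1}" using assms unfolding s_def by auto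
  define x where "x = g2 s"
  have dx3: "dist x a3 = dist p a3 * (1 - s)"
  proof -
    have "dist (g2 s) (g2 1) = dist (g2 0) (g2 1) * \<bar>s - 1\<bar>"
      using geo_dist[OF g2(1), of s 1] s01 by simp
    then show ?thesis using g2 s01 unfolding x_def by simp
  qed
  have i1: "(dist a1 x)\<^sup>2 \<le> (1 - s) * (dist a1 p)\<^sup>2 + s * (dist a1 a3)\<^sup>2 - s * (1 - s) * (dist p a3)\<^sup>2"
    using ineq[OF g2(1) s01, of a1] g2 unfolding x_def by simp
  have i2: "(dist a2 x)\<^sup>2 \<le> (1 - s) * (dist a2 p)\<^sup>2 + s * (dist a2 a3)\<^sup>2 - s * (1 - s) * (dist p a3)\<^sup>2"
    using ineq[OF g2(1) s01, of a2] g2 unfolding x_def by simp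
  have mus: "mu = 1 - s" using assms unfolding mu_def s_def by simp
  have "l1*(dist x a1)\<^sup>2 + l2*(dist x a2)\<^sup>2 + l3*(dist x a3)\<^sup>2
     \<le> l1*((1 - s) * (dist a1 p)\<^sup>2 + s * (dist a1 a3)\<^sup>2 - s * (1 - s) * (dist p a3)\<^sup>2)
       + l2*((1 - s) * (dist a2 p)\<^sup>2 + s * (dist a2 a3)\<^sup>2 - s * (1 - s) * (dist p a3)\<^sup>2)
       + l3*(dist x a3)\<^sup>2"
  proof -
    have c1: "dist x a1 = dist a1 x" "dist x a2 = dist a2 x" by (simp_all add: dist_commute)
    show ?thesis unfolding c1
      using mult_left_mono[OF i1 assms(2)] mult_left_mono[OF i2 assms(3)] by linarith
  qed
  also have "\<dots> = l1*l2*(dist a1 a2)\<^sup>2 + l1*l3*(dist a1 a3)\<^sup>2 + l2*l3*(dist a2 a3)\<^sup>2"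
    unfolding dp1 dp2 dx3 l1e l2e mus s_def[symmetric]
    by (simp add: algebra_simps power2_eq_square)
  finally show ?thesis by blast
qed

lemma L1: fixes p K :: real assumes "\<And>T. T > 0 \<Longrightarrow> 0 \<le> p*T + K" shows "0 \<le> p"
proof (rule ccontr)
  assume "\<not> 0 \<le> p"
  hence p: "p < 0" by simp
  define T where "T = (\<bar>K\<bar> + 1) / (- p)"
  have "T > 0" using p unfolding T_def by (simp add: divide_simps) 
  have "p * T = - (\<bar>K\<bar> + 1)" using p unfolding T_def by (simp add: field_simps)
  then have "p*T + K < 0" by linarith
  with assms[OF \<open>T>0\<close>] show False by simp
qed

lemma L2: fixes C D :: real assumes "\<And>e. e > 0 \<Longrightarrow> 0 \<le> C + e*D" shows "0 \<le> C"
proof (rule ccontr)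
  assume "\<not> 0 \<le> C"
  hence c: "C < 0" by simp
  define e where "e = - C / (2*(\<bar>D\<bar>+1))"
  have e: "e > 0" unfolding e_def by (intro divide_pos_pos) (use c in auto)
  have "e * D \<le> e * \<bar>D\<bar>" using e by (simp add: mult_left_mono)
  also have "e * \<bar>D\<bar> \<le> e * (\<bar>D\<bar> + 1)" using e by simp
  also have "e * (\<bar>D\<bar> + 1) = - C / 2" unfolding e_def by (simp add: field_simps)
  finally have "C + e*D < 0" using c by linarith
  with assms[OF e] show False by simp
qed

lemma L3: fixes x1 y1 x2 y2 u v :: real assumes "x1 < y1" "x2 < y2" "u \<ge> 0" "v \<ge> 0" "u + v = 1"
  shows "u * x1 + v * x2 < u * y1 + v * y2"
proof (cases "u = 0")
  case True then show ?thesis using assms by simp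
next
  case False
  then have "u * x1 < u * y1" using assms by simp
  moreover have "v * x2 \<le> v * y2" using assms by (simp add: mult_left_mono)
  ultimately show ?thesis by linarith
qed

theorem mainTheorem1:
  assumes "CAT0 TYPE('a::{metric_space, complete_space})"
  shows "curv_le_0 TYPE('a)"
  unfolding curv_le_0_def
proof (intro allI impI)
  fix a1 a2 a3 :: 'a and b1 b2 b3 :: "real^2"
  assume ct: "comparison_triangle a1 a2 a3 b1 b2 b3"
  have cat: "CAT0 TYPE('a)" by (rule assms)
  have gs: "geodesic_space TYPE('a)" and ineq: "\<And>(z::'a) g t. is_geodesic g \<Longrightarrow> t \<in> {0..1} \<Longrightarrow>
        (dist z (g t))\<^sup>2 \<le> (1 - t) * (dist z (g 0))\<^sup>2 + t * (dist z (g 1))\<^sup>2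
                          - t * (1 - t) * (dist (g 0) (g 1))\<^sup>2"
    using cat unfolding CAT0_def by blast+
  define M where "M = (\<lambda>x::'a. max (dist x a1) (max (dist x a2) (dist x a3)))"
  define \<alpha> where "\<alpha> = circumradius a1 a2 a3"
  have \<alpha>M: "\<alpha> = (INF x. M x)" unfolding \<alpha>_def circumradius_def M_def by simp
  have bdd: "bdd_below (range M)" unfolding M_def by (rule bdd_belowI[of _ 0]) (auto intro: max.coboundedI1)
  have \<alpha>le: "\<alpha> \<le> M x" for x unfolding \<alpha>M by (rule cINF_lower[OF bdd]) simp
  have \<alpha>0: "0 \<le> \<alpha>" unfolding \<alpha>M M_def by (rule cINF_greatest) (auto intro: max.coboundedI1)
  define S where "S = {y::real\<times>real\<times>real. \<exists>x. (dist x a1)\<^sup>2 - \<alpha>\<^sup>2 < fst y \<and>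
      (dist x a2)\<^sup>2 - \<alpha>\<^sup>2 < fst (snd y) \<and> (dist x a3)\<^sup>2 - \<alpha>\<^sup>2 < snd (snd y)}"
  have geo_comb: "(dist z (g v))\<^sup>2 - \<alpha>\<^sup>2 < u * y + v * y'"
    if "is_geodesic g" "u \<ge> 0" "v \<ge> 0" "u + v = 1"
       "(dist z (g 0))\<^sup>2 - \<alpha>\<^sup>2 < y" "(dist z (g 1))\<^sup>2 - \<alpha>\<^sup>2 < y'" for z :: 'a and g u v y y'
  proof -
    have v01: "v \<in> {0..1}" using that by auto
    have "(dist z (g v))\<^sup>2 \<le> u * (dist z (g 0))\<^sup>2 + v * (dist z (g 1))\<^sup>2"
    proof -
      have "(dist z (g v))\<^sup>2 \<le> (1 - v) * (dist z (g 0))\<^sup>2 + v * (dist z (g 1))\<^sup>2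
                          - v * (1 - v) * (dist (g 0) (g 1))\<^sup>2" by (rule ineq[OF that(1) v01])
      moreover have "0 \<le> v * (1 - v) * (dist (g 0) (g 1))\<^sup>2" using that by simp
      moreover have "1 - v = u" using that by simp
      ultimately show ?thesis by simp
    qed
    moreover have "u * ((dist z (g 0))\<^sup>2 - \<alpha>\<^sup>2) + v * ((dist z (g 1))\<^sup>2 - \<alpha>\<^sup>2) < u * y + v * y'"
      by (rule L3) (use that in auto)
    moreover have "u * ((dist z (g 0))\<^sup>2 - \<alpha>\<^sup>2) + v * ((dist z (g 1))\<^sup>2 - \<alpha>\<^sup>2)
        = u * (dist z (g 0))\<^sup>2 + v * (dist z (g 1))\<^sup>2 - (u + v) * \<alpha>\<^sup>2"
      by (simp add: algebra_simps)
    ultimately show ?thesis using that(4) by simp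
  qed
  have convS: "convex S"
  proof (rule convexI)
    fix y y' u v assume y: "y \<in> S" and y': "y' \<in> S" and uv0: "0 \<le> (u::real)" "0 \<le> v" "u + v = 1"
    have uv: "0 \<le> (u::real) \<and> 0 \<le> v \<and> u + v = 1" using uv0 by simp
    obtain x where x: "(dist x a1)\<^sup>2 - \<alpha>\<^sup>2 < fst y" "(dist x a2)\<^sup>2 - \<alpha>\<^sup>2 < fst (snd y)"
       "(dist x a3)\<^sup>2 - \<alpha>\<^sup>2 < snd (snd y)" using y unfolding S_def by blast
    obtain x' where x': "(dist x' a1)\<^sup>2 - \<alpha>\<^sup>2 < fst y'" "(dist x' a2)\<^sup>2 - \<alpha>\<^sup>2 < fst (snd y')"
       "(dist x' a3)\<^sup>2 - \<alpha>\<^sup>2 < snd (snd y')" using y' unfolding S_def by blast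
    obtain g where g: "is_geodesic g" "g 0 = x" "g 1 = x'" using gs unfolding geodesic_space_def by blast
    have "(dist (g v) a1)\<^sup>2 - \<alpha>\<^sup>2 < u * fst y + v * fst y'"
      using geo_comb[OF g(1), of u v a1] uv x x' g by (simp add: dist_commute)
    moreover have "(dist (g v) a2)\<^sup>2 - \<alpha>\<^sup>2 < u * fst (snd y) + v * fst (snd y')"
      using geo_comb[OF g(1), of u v a2] uv x x' g by (simp add: dist_commute)
    moreover have "(dist (g v) a3)\<^sup>2 - \<alpha>\<^sup>2 < u * snd (snd y) + v * snd (snd y')"
      using geo_comb[OF g(1), of u v a3] uv x x' g by (simp add: dist_commute)
    ultimately show "u *\<^sub>R y + v *\<^sub>R y' \<in> S" unfolding S_def by auto
  qed
  have notin: "0 \<notin> S"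
  proof
    assume "0 \<in> S"
    then obtain x where x: "(dist x a1)\<^sup>2 < \<alpha>\<^sup>2" "(dist x a2)\<^sup>2 < \<alpha>\<^sup>2" "(dist x a3)\<^sup>2 < \<alpha>\<^sup>2"
      unfolding S_def by auto
    have "dist x a1 < \<alpha>" "dist x a2 < \<alpha>" "dist x a3 < \<alpha>"
      using x \<alpha>0 by (simp_all add: power_less_imp_less_base)
    then have "M x < \<alpha>" unfolding M_def by simp
    with \<alpha>le[of x] show False by simp
  qed
  obtain w where w: "w \<noteq> 0" "\<forall>y\<in>S. 0 \<le> inner w y"
    using separating_hyperplane_set_0[OF convS notin] by blast
  obtain p q r where pqr: "w = (p, q, r)" by (cases w) auto
  define u1 where "u1 = (\<lambda>x. (dist x a1)\<^sup>2 - \<alpha>\<^sup>2)"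
  define u2 where "u2 = (\<lambda>x. (dist x a2)\<^sup>2 - \<alpha>\<^sup>2)"
  define u3 where "u3 = (\<lambda>x. (dist x a3)\<^sup>2 - \<alpha>\<^sup>2)"
  have key: "0 \<le> p*(u1 x + T1) + q*(u2 x + T2) + r*(u3 x + T3)"
    if "T1 > 0" "T2 > 0" "T3 > 0" for x T1 T2 T3
  proof -
    have "(u1 x + T1, u2 x + T2, u3 x + T3) \<in> S" unfolding S_def u1_def u2_def u3_def
      using that by (auto intro!: exI[of _ x])
    with w(2) have "0 \<le> inner (p, q, r) (u1 x + T1, u2 x + T2, u3 x + T3)" unfolding pqr by blast
    then show ?thesis by (simp add: inner_real_def)
  qed
  obtain x0 :: 'a where True by blast
  have p0: "0 \<le> p"
    by (rule L1[of p "p*u1 x0 + q*(u2 x0 + 1) + r*(u3 x0 + 1)"])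
      (use key[of _ 1 1 x0] in \<open>simp add: algebra_simps\<close>)
  have q0: "0 \<le> q"
    by (rule L1[of q "p*(u1 x0 + 1) + q*u2 x0 + r*(u3 x0 + 1)"])
      (use key[of 1 _ 1 x0] in \<open>simp add: algebra_simps\<close>)
  have r0: "0 \<le> r"
    by (rule L1[of r "p*(u1 x0 + 1) + q*(u2 x0 + 1) + r*u3 x0"])
      (use key[of 1 1 _ x0] in \<open>simp add: algebra_simps\<close>)
  define \<sigma> where "\<sigma> = p + q + r"
  have \<sigma>: "\<sigma> > 0"
  proof -
    have "\<not> (p = 0 \<and> q = 0 \<and> r = 0)" using w(1) pqr by (auto simp: zero_prod_def)
    then show ?thesis unfolding \<sigma>_def using p0 q0 r0 by linarith
  qed
  have allx: "0 \<le> p*u1 x + q*u2 x + r*u3 x" for x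
    by (rule L2[of _ \<sigma>]) (use key[of e e e x for e] in \<open>simp add: algebra_simps \<sigma>_def\<close>)
  define l1 where "l1 = p / \<sigma>"
  define l2 where "l2 = q / \<sigma>"
  define l3 where "l3 = r / \<sigma>"
  have lpos: "l1 \<ge> 0" "l2 \<ge> 0" "l3 \<ge> 0" using p0 q0 r0 \<sigma> unfolding l1_def l2_def l3_def by auto
  have lsum: "l1 + l2 + l3 = 1"
  proof -
    have "l1 + l2 + l3 = (p + q + r) / \<sigma>" unfolding l1_def l2_def l3_def by (simp add: add_divide_distrib)
    then show ?thesis using \<sigma> unfolding \<sigma>_def by simp
  qed
  define K where "K = l1*l2*(dist a1 a2)\<^sup>2 + l1*l3*(dist a1 a3)\<^sup>2 + l2*l3*(dist a2 a3)\<^sup>2"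
  obtain x where x: "l1*(dist x a1)\<^sup>2 + l2*(dist x a2)\<^sup>2 + l3*(dist x a3)\<^sup>2 \<le> K"
    using nested[OF cat lpos lsum, of a1 a2 a3] unfolding K_def by blast
  have "0 \<le> l1*u1 x + l2*u2 x + l3*u3 x"
  proof -
    have "l1*u1 x + l2*u2 x + l3*u3 x = (p*u1 x + q*u2 x + r*u3 x) / \<sigma>"
      unfolding l1_def l2_def l3_def by (simp add: add_divide_distrib)
    then show ?thesis using allx[of x] \<sigma> by simp
  qed
  then have "\<alpha>\<^sup>2 \<le> l1*(dist x a1)\<^sup>2 + l2*(dist x a2)\<^sup>2 + l3*(dist x a3)\<^sup>2"
  proof -
    have "l1*u1 x + l2*u2 x + l3*u3 x = (l1*(dist x a1)\<^sup>2 + l2*(dist x a2)\<^sup>2 + l3*(dist x a3)\<^sup>2) - (l1+l2+l3)*\<alpha>\<^sup>2"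
      unfolding u1_def u2_def u3_def by (simp add: algebra_simps)
    then show ?thesis using \<open>0 \<le> l1*u1 x + l2*u2 x + l3*u3 x\<close> lsum by simp
  qed
  with x have aK: "\<alpha>\<^sup>2 \<le> K" by linarith
  have sK: "sqrt K \<le> circumradius b1 b2 b3"
    unfolding circumradius_def
  proof (rule cINF_greatest)
    fix y :: "real^2"
    let ?m = "max (dist y b1) (max (dist y b2) (dist y b3))"
    have "K \<le> l1*(dist y b1)\<^sup>2 + l2*(dist y b2)\<^sup>2 + l3*(dist y b3)\<^sup>2"
      using eucl_K[OF lpos lsum, of b1 b2 b3 y] ct unfolding K_def comparison_triangle_def by simp
    also have "\<dots> \<le> l1*?m\<^sup>2 + l2*?m\<^sup>2 + l3*?m\<^sup>2"
      using lpos by (intro add_mono mult_left_mono power_mono) auto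
    also have "\<dots> = (l1+l2+l3)*?m\<^sup>2" by (simp add: algebra_simps)
    also have "\<dots> = ?m\<^sup>2" using lsum by simp
    finally have "K \<le> ?m\<^sup>2" .
    moreover have "0 \<le> ?m" by (auto intro: max.coboundedI1)
    ultimately show "sqrt K \<le> ?m" by (simp add: real_sqrt_le_iff real_le_lsqrt real_sqrt_le_mono)
  qed simp
  have "\<alpha> \<le> sqrt K" using aK \<alpha>0 by (simp add: real_le_rsqrt)
  with sK show "circumradius a1 a2 a3 \<le> circumradius b1 b2 b3" unfolding \<alpha>_def by linarith
qed

end
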